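(* Let $G=(V,E)$ be an atomic bispanning graph, $v\in V$ a vertex of degree $3$ with adjacent vertices $x,y,z$ joined to $v$ by edges $e_x,e_y,e_z$, and let $G_{x,y},G_{x,z},G_{y,z}$ be the reduction graphs. Then $$V_{\tau(G)}=\rho_{e_{x,y},z}(V_{\tau(G_{x,y})})\,\dot\cup\,\rho_{e_{x,z},y}(V_{\tau(G_{x,z})})\,\dot\cup\,\rho_{e_{y,z},x}(V_{\tau(G_{y,z})}),$$ where for $(a,b)\in\{(x,y),(x,z),(y,z)\}$ and $c$ the remaining neighbour, $\rho_{e_{a,b},c}:V_{\tau(G_{a,b})}\to V_{\tau(G)}$ maps $(S,T)$ to $(S-e_{a,b}+e_a+e_b,\;T+e_c)$ if $e_{a,b}\in S$ and to $(S+e_c,\;T-e_{a,b}+e_a+e_b)$ if $e_{a,b}\in T$.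
   Context: Graphs are finite, undirected, may have parallel edges, no loops; $X+a=X\cup\{a\}$, $X-a=X\setminus\{a\}$. A spanning tree is $T\subseteq E$ with $(V,T)$ connected and acyclic; $G$ is bispanning if $E$ is the union of two disjoint spanning trees; atomic if its only bispanning subgraphs are itself and single vertices. For a bispanning graph $H$ with edge set $F$, $V_{\tau(H)}$ is the set of ordered pairs $(S,T)$ of disjoint spanning trees of $H$ with $S\cup T=F$. The reduction graph $G_{a,b}$ has vertex set $V-v$ and edge set $E-e_x-e_y-e_z+e_{a,b}$, where $e_{a,b}$ is a new edge with ends $a,b$ (it is bispanning). *)

theory Defs
  imports Main
begin

text \<open>Multigraphs: a vertex set V, an edge set E (edge labels of type 'e), and an
 incidence map inc giving the set of ends of each edge.  Parallel edges are distinct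
 labels with equal ends.  No loops: every edge has exactly two ends.\<close>

definition wf_graph :: "'v set \<Rightarrow> 'e set \<Rightarrow> ('e \<Rightarrow> 'v set) \<Rightarrow> bool" where
  "wf_graph V E inc \<longleftrightarrow> finite V \<and> finite E \<and> (\<forall>e\<in>E. inc e \<subseteq> V \<and> card (inc e) = 2)"

definition adj :: "('e \<Rightarrow> 'v set) \<Rightarrow> 'e set \<Rightarrow> ('v \<times> 'v) set" where
  "adj inc F = {(u, w). \<exists>e\<in>F. inc e = {u, w}}"

definition connected_on :: "'v set \<Rightarrow> ('e \<Rightarrow> 'v set) \<Rightarrow> 'e set \<Rightarrow> bool" where
  "connected_on V inc F \<longleftrightarrow> (\<forall>u\<in>V. \<forall>w\<in>V. (u, w) \<in> (adj inc F)\<^sup>*)"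

definition is_cycle :: "('e \<Rightarrow> 'v set) \<Rightarrow> 'e set \<Rightarrow> 'v list \<Rightarrow> 'e list \<Rightarrow> bool" where
  "is_cycle inc F vs es \<longleftrightarrow>
     length vs = length es \<and> length es \<ge> 1 \<and> distinct vs \<and> distinct es \<and> set es \<subseteq> F \<and>
     (\<forall>i < length es. inc (es ! i) = {vs ! i, vs ! ((i + 1) mod length es)})"

definition acyclic_edges :: "('e \<Rightarrow> 'v set) \<Rightarrow> 'e set \<Rightarrow> bool" where
  "acyclic_edges inc F \<longleftrightarrow> \<not> (\<exists>vs es. is_cycle inc F vs es)"

definition spanning_tree :: "'v set \<Rightarrow> 'e set \<Rightarrow> ('e \<Rightarrow> 'v set) \<Rightarrow> 'e set \<Rightarrow> bool" where
  "spanning_tree V E inc T \<longleftrightarrow> T \<subseteq> E \<and> connected_on V inc T \<and> acyclic_edges inc T"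

definition tree_pairs :: "'v set \<Rightarrow> 'e set \<Rightarrow> ('e \<Rightarrow> 'v set) \<Rightarrow> ('e set \<times> 'e set) set" where
  "tree_pairs V E inc = {(S, T). spanning_tree V E inc S \<and> spanning_tree V E inc T \<and>
                                  S \<inter> T = {} \<and> S \<union> T = E}"

definition bispanning :: "'v set \<Rightarrow> 'e set \<Rightarrow> ('e \<Rightarrow> 'v set) \<Rightarrow> bool" where
  "bispanning V E inc \<longleftrightarrow> tree_pairs V E inc \<noteq> {}"

definition subgraph :: "'v set \<Rightarrow> 'e set \<Rightarrow> 'v set \<Rightarrow> 'e set \<Rightarrow> ('e \<Rightarrow> 'v set) \<Rightarrow> bool" where
  "subgraph V' E' V E inc \<longleftrightarrow> V' \<noteq> {} \<and> V' \<subseteq> V \<and> E' \<subseteq> E \<and> (\<forall>e\<in>E'. inc e \<subseteq> V')"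

definition atomic :: "'v set \<Rightarrow> 'e set \<Rightarrow> ('e \<Rightarrow> 'v set) \<Rightarrow> bool" where
  "atomic V E inc \<longleftrightarrow>
     (\<forall>V' E'. subgraph V' E' V E inc \<and> bispanning V' E' inc \<longrightarrow>
        (V' = V \<and> E' = E) \<or> (card V' = 1 \<and> E' = {}))"

definition red_V :: "'v set \<Rightarrow> 'v \<Rightarrow> 'v set" where
  "red_V V v = V - {v}"

definition red_E :: "'e set \<Rightarrow> 'e \<Rightarrow> 'e \<Rightarrow> 'e \<Rightarrow> 'e \<Rightarrow> 'e set" where
  "red_E E ex ey ez eab = (E - {ex, ey, ez}) \<union> {eab}"

definition red_inc :: "('e \<Rightarrow> 'v set) \<Rightarrow> 'e \<Rightarrow> 'v \<Rightarrow> 'v \<Rightarrow> ('e \<Rightarrow> 'v set)" where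
  "red_inc inc eab a b = inc(eab := {a, b})"

text \<open>rho_{eab,c}, where ea, eb are the edges from v to a, b and ec the edge from v to c.\<close>
definition rho :: "'e \<Rightarrow> 'e \<Rightarrow> 'e \<Rightarrow> 'e \<Rightarrow> 'e set \<times> 'e set \<Rightarrow> 'e set \<times> 'e set" where
  "rho eab ea eb ec ST =
     (let S = fst ST; T = snd ST in
      if eab \<in> S then (S - {eab} \<union> {ea, eb}, T \<union> {ec})
      else (S \<union> {ec}, T - {eab} \<union> {ea, eb}))"

end

theory Submission
  imports Defs
begin


abbreviation reach :: "('e \<Rightarrow> 'v set) \<Rightarrow> 'e set \<Rightarrow> 'v \<Rightarrow> 'v \<Rightarrow> bool" where
  "reach inc F u w \<equiv> (u, w) \<in> (adj inc F)\<^sup>*"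

lemma adj_swap: "(a, b) \<in> adj inc F \<Longrightarrow> (b, a) \<in> adj inc F"
  unfolding adj_def by clarsimp (metis insert_commute)

lemma adj_sym: "sym (adj inc F)"
  unfolding sym_def by (simp add: adj_swap)

lemma reach_sym: "reach inc F u w \<Longrightarrow> reach inc F w u"
  by (rule symD[OF sym_rtrancl[OF adj_sym]])

lemma adj_mono: "F \<subseteq> G \<Longrightarrow> adj inc F \<subseteq> adj inc G"
  unfolding adj_def by auto

lemma reach_mono: "F \<subseteq> G \<Longrightarrow> reach inc F u w \<Longrightarrow> reach inc G u w"
  using rtrancl_mono[OF adj_mono] by blast

lemma adj_cong: "\<forall>e\<in>F. inc e = inc' e \<Longrightarrow> adj inc F = adj inc' F"
  unfolding adj_def by force

lemma adj_edge: "e \<in> F \<Longrightarrow> inc e = {u, w} \<Longrightarrow> (u, w) \<in> adj inc F"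
  unfolding adj_def by auto

lemma reach_edge: "e \<in> F \<Longrightarrow> inc e = {u, w} \<Longrightarrow> reach inc F u w"
  using adj_edge by (metis r_into_rtrancl)

lemma isolated:
  assumes "\<forall>g\<in>F. v \<notin> inc g" "reach inc F v w"
  shows "w = v"
  using assms(2)
proof (induction rule: rtrancl_induct)
  case base then show ?case by simp
next
  case (step a b)
  then show ?case using assms(1) unfolding adj_def by auto
qed

lemma reach_path:
  assumes "reach inc F u w"
  shows "\<exists>vs es. length vs = Suc (length es) \<and> distinct vs \<and> distinct es \<and> set es \<subseteq> F \<and>
     vs ! 0 = u \<and> last vs = w \<and> (\<forall>i<length es. inc (es ! i) = {vs ! i, vs ! Suc i})"
  using assms
proof (induction rule: rtrancl_induct)
  case base
  show ?case by (rule exI[of _ "[u]"], rule exI[of _ "[]"]) auto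
next
  case (step a b)
  from step.IH obtain vs es where P: "length vs = Suc (length es)" "distinct vs" "distinct es"
    "set es \<subseteq> F" "vs ! 0 = u" "last vs = a" "\<forall>i<length es. inc (es ! i) = {vs ! i, vs ! Suc i}"
    by blast
  from step.hyps(2) obtain f where f: "f \<in> F" "inc f = {a, b}" unfolding adj_def by auto
  have lastv: "vs ! length es = a" using P(1,6) by (metis diff_Suc_1 last_conv_nth list.size(3) nat.distinct(1))
  show ?case
  proof (cases "b \<in> set vs")
    case True
    then obtain k where k: "k < length vs" "vs ! k = b" by (auto simp: in_set_conv_nth)
    show ?thesis
    proof (intro exI conjI)
      show "length (take (Suc k) vs) = Suc (length (take k es))" using k P(1) by simp
      show "distinct (take (Suc k) vs)" using P by simp
      show "distinct (take k es)" using P by simp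
      show "set (take k es) \<subseteq> F" using P(4) by (meson order_trans set_take_subset)
      show "take (Suc k) vs ! 0 = u" using P(5) by simp
      show "last (take (Suc k) vs) = b" using k by (simp add: take_Suc_conv_app_nth)
      show "\<forall>i<length (take k es). inc (take k es ! i) = {take (Suc k) vs ! i, take (Suc k) vs ! Suc i}"
        using P(7) by simp
    qed
  next
    case False
    have fnot: "f \<notin> set es"
    proof
      assume "f \<in> set es"
      then obtain j where j: "j < length es" "es ! j = f" by (auto simp: in_set_conv_nth)
      then have "b \<in> {vs ! j, vs ! Suc j}" using P(7) f by auto
      moreover have "vs ! j \<in> set vs" "vs ! Suc j \<in> set vs" using j P(1) by auto
      ultimately show False using False by auto
    qed
    show ?thesis
    proof (intro exI conjI)
      show "length (vs @ [b]) = Suc (length (es @ [f]))" using P(1) by simp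
      show "distinct (vs @ [b])" using P(2) False by simp
      show "distinct (es @ [f])" using P(3) fnot by simp
      show "set (es @ [f]) \<subseteq> F" using P(4) f by simp
      show "(vs @ [b]) ! 0 = u" using P(1,5) by (simp add: nth_append)
      show "last (vs @ [b]) = b" by simp
      show "\<forall>i<length (es @ [f]). inc ((es @ [f]) ! i) = {(vs @ [b]) ! i, (vs @ [b]) ! Suc i}"
      proof (intro allI impI)
        fix i assume i: "i < length (es @ [f])"
        show "inc ((es @ [f]) ! i) = {(vs @ [b]) ! i, (vs @ [b]) ! Suc i}"
        proof (cases "i < length es")
          case True then show ?thesis using P(1,7) by (simp add: nth_append)
        next
          case False
          then have "i = length es" using i by simp
          then show ?thesis using P(1) f lastv by (simp add: nth_append)
        qed
      qed
    qed
  qed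
qed

lemma acyc_iff:
  "acyclic_edges inc F \<longleftrightarrow> (\<forall>e\<in>F. \<forall>u w. inc e = {u, w} \<longrightarrow> \<not> reach inc (F - {e}) u w)"
proof
  assume A: "acyclic_edges inc F"
  show "\<forall>e\<in>F. \<forall>u w. inc e = {u, w} \<longrightarrow> \<not> reach inc (F - {e}) u w"
  proof (intro ballI allI impI notI)
    fix e u w assume e: "e \<in> F" "inc e = {u, w}" and r: "reach inc (F - {e}) u w"
    from reach_path[OF r] obtain vs es where P: "length vs = Suc (length es)" "distinct vs" "distinct es"
      "set es \<subseteq> F - {e}" "vs ! 0 = u" "last vs = w" "\<forall>i<length es. inc (es ! i) = {vs ! i, vs ! Suc i}"
      by blast
    have lastv: "vs ! length es = w" using P(1,6) by (metis diff_Suc_1 last_conv_nth list.size(3) nat.distinct(1))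
    have "is_cycle inc F vs (es @ [e])"
      unfolding is_cycle_def
    proof (intro conjI allI impI)
      show "length vs = length (es @ [e])" using P by simp
      show "1 \<le> length (es @ [e])" by simp
      show "distinct vs" by fact
      show "distinct (es @ [e])" using P by auto
      show "set (es @ [e]) \<subseteq> F" using P e by auto
      fix i assume i: "i < length (es @ [e])"
      show "inc ((es @ [e]) ! i) = {vs ! i, vs ! ((i + 1) mod length (es @ [e]))}"
      proof (cases "i < length es")
        case True then show ?thesis using P by (simp add: nth_append)
      next
        case False
        then have "i = length es" using i by simp
        then show ?thesis using P lastv e by (simp add: nth_append insert_commute)
      qed
    qed
    then show False using A unfolding acyclic_edges_def by blast
  qed
next
  assume C: "\<forall>e\<in>F. \<forall>u w. inc e = {u, w} \<longrightarrow> \<not> reach inc (F - {e}) u w"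
  show "acyclic_edges inc F"
    unfolding acyclic_edges_def
  proof
    assume "\<exists>vs es. is_cycle inc F vs es"
    then obtain vs es where cyc: "is_cycle inc F vs es" by blast
    define n where "n = length es"
    have cy: "length es = n" "length vs = n" "n \<ge> 1" "distinct es" "set es \<subseteq> F"
      "\<forall>i<n. inc (es ! i) = {vs ! i, vs ! ((i + 1) mod n)}"
      using cyc unfolding is_cycle_def n_def by auto
    have claim: "k < n \<Longrightarrow> reach inc (F - {es ! 0}) (vs ! ((n - k) mod n)) (vs ! 0)" for k
    proof (induction k)
      case 0 then show ?case by simp
    next
      case (Suc k)
      define j where "j = n - Suc k"
      have j: "j < n" "j \<noteq> 0" "j + 1 = n - k" using Suc.prems unfolding j_def by auto
      have "es ! j \<in> F" using cy j by auto
      moreover have "es ! j \<noteq> es ! 0" using cy j by (simp add: nth_eq_iff_index_eq)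
      moreover have "inc (es ! j) = {vs ! j, vs ! ((n - k) mod n)}" using cy j by (metis)
      ultimately have "(vs ! j, vs ! ((n - k) mod n)) \<in> adj inc (F - {es ! 0})"
        by (intro adj_edge) auto
      moreover have "reach inc (F - {es ! 0}) (vs ! ((n - k) mod n)) (vs ! 0)"
        using Suc by simp
      ultimately have "reach inc (F - {es ! 0}) (vs ! j) (vs ! 0)"
        by (rule converse_rtrancl_into_rtrancl)
      then show ?case using j unfolding j_def by simp
    qed
    have "reach inc (F - {es ! 0}) (vs ! ((n - (n - 1)) mod n)) (vs ! 0)"
      using claim[of "n - 1"] cy by simp
    then have "reach inc (F - {es ! 0}) (vs ! 0) (vs ! ((0 + 1) mod n))"
      using cy by (simp add: reach_sym)
    moreover have "es ! 0 \<in> F" using cy by (metis nth_mem less_le_trans zero_less_one subsetD)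
    moreover have "inc (es ! 0) = {vs ! 0, vs ! ((0 + 1) mod n)}"
      using cy by auto
    ultimately show False using C by blast
  qed
qed



lemma acyc_mono: "F \<subseteq> G \<Longrightarrow> acyclic_edges inc G \<Longrightarrow> acyclic_edges inc F"
  unfolding acyclic_edges_def is_cycle_def by blast

lemma acyc_cong: "\<forall>e\<in>F. inc e = inc' e \<Longrightarrow> acyclic_edges inc F \<longleftrightarrow> acyclic_edges inc' F"
proof -
  assume a: "\<forall>e\<in>F. inc e = inc' e"
  have "adj inc (F - {e}) = adj inc' (F - {e})" for e using a by (intro adj_cong) auto
  then show ?thesis unfolding acyc_iff using a by auto
qed

lemma leaf_reach:
  assumes "\<forall>g\<in>F. v \<in> inc g \<longrightarrow> g = e" "inc e = {v, z}" "reach inc F u w" "u \<noteq> v"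
  shows "(w \<noteq> v \<longrightarrow> reach inc (F - {e}) u w) \<and> (w = v \<longrightarrow> reach inc (F - {e}) u z)"
  using assms(3)
proof (induction rule: rtrancl_induct)
  case base then show ?case using assms(4) by simp
next
  case (step a b)
  from step.hyps(2) obtain g where g: "g \<in> F" "inc g = {a, b}" unfolding adj_def by auto
  show ?case
  proof (cases "g = e")
    case True
    then have ab: "{a, b} = {v, z}" using g assms(2) by simp
    then show ?thesis using step.IH by (auto simp: doubleton_eq_iff)
  next
    case False
    then have "a \<noteq> v" "b \<noteq> v" using g assms(1) by auto
    moreover have "(a, b) \<in> adj inc (F - {e})" using g False by (intro adj_edge) auto
    ultimately show ?thesis using step.IH by (meson rtrancl.rtrancl_into_rtrancl)
  qed
qed

lemma contract_reach:
  assumes "\<forall>g\<in>F. v \<in> inc g \<longrightarrow> g = ea \<or> g = eb" "inc ea = {v, a}" "inc eb = {v, b}"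
    "eab \<notin> F" "reach inc F u w" "u \<noteq> v"
  shows "(w \<noteq> v \<longrightarrow> reach (inc(eab := {a, b})) (F - {ea, eb} \<union> {eab}) u w) \<and>
         (w = v \<longrightarrow> reach (inc(eab := {a, b})) (F - {ea, eb} \<union> {eab}) u a)"
  using assms(5)
proof (induction rule: rtrancl_induct)
  case base then show ?case using assms(6) by simp
next
  case (step c d)
  let ?i = "inc(eab := {a, b})" and ?F = "F - {ea, eb} \<union> {eab}"
  have ab: "(a, b) \<in> adj ?i ?F" "(b, a) \<in> adj ?i ?F"
    by (rule adj_edge[of eab], simp, simp)+ (simp add: insert_commute)
  from step.hyps(2) obtain g where g: "g \<in> F" "inc g = {c, d}" unfolding adj_def by auto
  show ?case
  proof (cases "g = ea")
    case True
    then have "{c, d} = {v, a}" using g assms(2) by simp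
    then show ?thesis using step.IH by (auto simp: doubleton_eq_iff)
  next
    case False
    show ?thesis
    proof (cases "g = eb")
      case True
      then have cd: "{c, d} = {v, b}" using g assms(3) by simp
      show ?thesis
      proof (cases "c = v")
        case True
        then have "d = b" using cd by (auto simp: doubleton_eq_iff)
        have r: "reach ?i ?F u a" using step.IH True by blast
        have "reach ?i ?F u b" using r ab(1) by (rule rtrancl_into_rtrancl)
        then show ?thesis using r \<open>d = b\<close> by blast
      next
        case cv: False
        then have "c = b" "d = v" using cd by (auto simp: doubleton_eq_iff)
        have r: "reach ?i ?F u b" using step.IH cv \<open>c = b\<close> by blast
        have "reach ?i ?F u a" using r ab(2) by (rule rtrancl_into_rtrancl)
        then show ?thesis using \<open>d = v\<close> by blast
      qed
    next
      case False2: False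
      then have "c \<noteq> v" "d \<noteq> v" using g assms(1) \<open>g \<noteq> ea\<close> by auto
      moreover have "g \<noteq> eab" using g assms(4) by auto
      moreover have "(c, d) \<in> adj ?i ?F" using g False False2 \<open>g \<noteq> eab\<close>
        by (intro adj_edge[of g]) auto
      ultimately show ?thesis using step.IH by (meson rtrancl.rtrancl_into_rtrancl)
    qed
  qed
qed

lemma expand_reach:
  assumes "inc ea = {v, a}" "inc eb = {v, b}" "reach (inc(eab := {a, b})) F' u w"
  shows "reach inc (F' - {eab} \<union> {ea, eb}) u w"
  using assms(3)
proof (induction rule: rtrancl_induct)
  case base then show ?case by simp
next
  case (step c d)
  let ?F = "F' - {eab} \<union> {ea, eb}"
  from step.hyps(2) obtain g where g: "g \<in> F'" "(inc(eab := {a, b})) g = {c, d}"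
    unfolding adj_def by auto
  show ?case
  proof (cases "g = eab")
    case True
    then have cd: "{c, d} = {a, b}" using g by simp
    have av: "(a, v) \<in> adj inc ?F" using assms(1) by (intro adj_edge[of ea]) (auto simp: insert_commute)
    have bv: "(b, v) \<in> adj inc ?F" using assms(2) by (intro adj_edge[of eb]) (auto simp: insert_commute)
    have "reach inc ?F a b" "reach inc ?F b a"
      using av bv adj_swap[OF av] adj_swap[OF bv] by (meson converse_rtrancl_into_rtrancl r_into_rtrancl)+
    then have "reach inc ?F c d" using cd by (auto simp: doubleton_eq_iff)
    then show ?thesis by (rule rtrancl_trans[OF step.IH])
  next
    case False
    then have "(c, d) \<in> adj inc ?F" using g by (intro adj_edge[of g]) auto
    then show ?thesis using step.IH by (rule rtrancl_into_rtrancl[rotated])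
  qed
qed



locale rs =
  fixes V :: "'v set" and E :: "'e set" and inc :: "'e \<Rightarrow> 'v set"
    and v a b c :: 'v and ea eb ec eab :: 'e
  assumes wf: "wf_graph V E inc" and vV: "v \<in> V"
    and edges_v: "{e \<in> E. v \<in> inc e} = {ea, eb, ec}"
    and dist: "ea \<noteq> eb" "ea \<noteq> ec" "eb \<noteq> ec"
    and inc_a: "inc ea = {v, a}" and inc_b: "inc eb = {v, b}" and inc_c: "inc ec = {v, c}"
    and new: "eab \<notin> E"
begin

abbreviation "V' \<equiv> V - {v}"
abbreviation "E' \<equiv> E - {ea, eb, ec} \<union> {eab}"
abbreviation "inc' \<equiv> inc(eab := {a, b})"

lemma inE: "ea \<in> E" "eb \<in> E" "ec \<in> E" using edges_v by blast+

lemma vfree: "g \<in> E \<Longrightarrow> v \<in> inc g \<Longrightarrow> g = ea \<or> g = eb \<or> g = ec"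
  using edges_v by blast

lemma nbr: "a \<in> V" "a \<noteq> v" "b \<in> V" "b \<noteq> v" "c \<in> V" "c \<noteq> v"
proof -
  have w: "\<forall>e\<in>E. inc e \<subseteq> V \<and> card (inc e) = 2" using wf unfolding wf_graph_def by blast
  show "a \<in> V" "b \<in> V" "c \<in> V" using w inE inc_a inc_b inc_c by blast+
  show "a \<noteq> v" using w inE(1) inc_a by force
  show "b \<noteq> v" using w inE(2) inc_b by force
  show "c \<noteq> v" using w inE(3) inc_c by force
qed

lemma agree: "g \<in> E \<Longrightarrow> inc' g = inc g" using new by auto

lemma agree_set: assumes "X \<subseteq> E" shows "\<forall>g\<in>X. inc' g = inc g"
proof
  fix g assume "g \<in> X"
  then have "g \<noteq> eab" using assms new by auto
  then show "inc' g = inc g" by simp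
qed

lemma agree_set2: assumes "X \<subseteq> E" shows "\<forall>g\<in>X. inc g = inc' g"
  using agree_set[OF assms] by simp

lemma ST4:
  assumes st: "spanning_tree V' E' inc' S'" and e: "eab \<in> S'"
  shows "spanning_tree V E inc (S' - {eab} \<union> {ea, eb})"
proof -
  let ?S = "S' - {eab} \<union> {ea, eb}"
  have S'E: "S' \<subseteq> E'" and con: "connected_on V' inc' S'" and ac: "acyclic_edges inc' S'"
    using st unfolding spanning_tree_def by auto
  have ag: "\<forall>g\<in>S'-{eab}. inc' g = inc g" using S'E agree by auto
  have vf: "\<forall>g\<in>S'-{eab}. v \<notin> inc g" using S'E vfree by blast
  have nS: "ea \<notin> S'" "eb \<notin> S'" using S'E inE new by auto
  have acyc': "\<forall>e\<in>S'. \<forall>u w. inc' e = {u, w} \<longrightarrow> \<not> reach inc' (S' - {e}) u w"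
    using ac[unfolded acyc_iff] .
  have ra: "reach inc ?S a u" if u: "u \<in> V" for u
  proof (cases "u = v")
    case True
    then show ?thesis using inc_a by (intro reach_edge[of ea]) (auto simp: insert_commute)
  next
    case False
    then have "reach inc' S' a u" using con u nbr unfolding connected_on_def by blast
    then show ?thesis using expand_reach[where inc=inc and ea=ea and eb=eb and eab=eab and v=v and a=a and b=b, OF inc_a inc_b] by blast
  qed
  have "connected_on V inc ?S" unfolding connected_on_def
    using ra reach_sym rtrancl_trans by metis
  moreover have "acyclic_edges inc ?S" unfolding acyc_iff
  proof (intro ballI allI impI notI)
    fix g p q assume g: "g \<in> ?S" and gi: "inc g = {p, q}" and r: "reach inc (?S - {g}) p q"
    have eq: "?S - {ea} - {eb} = S' - {eab}" using nS dist by auto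
    show False
    proof (cases "g = ea")
      case True
      then have r2: "reach inc (?S - {ea}) a v" using gi inc_a r reach_sym
        by (auto simp: doubleton_eq_iff)
      have "\<forall>h\<in>?S - {ea}. v \<in> inc h \<longrightarrow> h = eb" using vf by auto
      from leaf_reach[OF this inc_b r2 nbr(2)] have "reach inc (S' - {eab}) a b" using eq by simp
      then have "reach inc' (S' - {eab}) a b" using adj_cong[OF ag] by metis
      then show False using acyc' e by simp
    next
      case F1: False
      show False
      proof (cases "g = eb")
        case True
        then have r2: "reach inc (?S - {eb}) b v" using gi inc_b r reach_sym
          by (auto simp: doubleton_eq_iff)
        have "\<forall>h\<in>?S - {eb}. v \<in> inc h \<longrightarrow> h = ea" using vf by auto
        from leaf_reach[OF this inc_a r2 nbr(4)] have "reach inc (?S - {eb} - {ea}) b a" by simp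
        moreover have "?S - {eb} - {ea} = S' - {eab}" using eq by auto
        ultimately have "reach inc (S' - {eab}) a b" using reach_sym by metis
        then have "reach inc' (S' - {eab}) a b" using adj_cong[OF ag] by metis
        then show False using acyc' e by simp
      next
        case False
        then have gS: "g \<in> S' - {eab}" using g F1 by auto
        then have pq: "p \<noteq> v" "q \<noteq> v" using vf gi by auto
        have h1: "\<forall>h\<in>?S - {g}. v \<in> inc h \<longrightarrow> h = ea \<or> h = eb" using vf by auto
        have h2: "eab \<notin> ?S - {g}" using nS new inE by auto
        from contract_reach[OF h1 inc_a inc_b h2 r pq(1)] pq(2)
        have "reach inc' (?S - {g} - {ea, eb} \<union> {eab}) p q" by simp
        moreover have "?S - {g} - {ea, eb} \<union> {eab} = S' - {g}" using gS e nS by auto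
        ultimately have "reach inc' (S' - {g}) p q" by simp
        moreover have "inc' g = {p, q}" using ag gS gi by auto
        ultimately show False using acyc' gS by blast
      qed
    qed
  qed
  moreover have "?S \<subseteq> E" using S'E inE by auto
  ultimately show ?thesis unfolding spanning_tree_def by blast
qed

lemma ST1:
  assumes st: "spanning_tree V' E' inc' T'" and e: "eab \<notin> T'"
  shows "spanning_tree V E inc (T' \<union> {ec})"
proof -
  let ?T = "T' \<union> {ec}"
  have T'E: "T' \<subseteq> E - {ea, eb, ec}" and con: "connected_on V' inc' T'" and ac: "acyclic_edges inc' T'"
    using st e unfolding spanning_tree_def by auto
  have ag: "\<forall>g\<in>T'. inc' g = inc g" using agree_set[of T'] T'E by blast
  have vf: "\<forall>g\<in>T'. v \<notin> inc g" using T'E vfree by blast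
  have acyc': "\<forall>e\<in>T'. \<forall>u w. inc' e = {u, w} \<longrightarrow> \<not> reach inc' (T' - {e}) u w"
    using ac[unfolded acyc_iff] .
  have ra: "reach inc ?T c u" if u: "u \<in> V" for u
  proof (cases "u = v")
    case True
    then show ?thesis using inc_c by (intro reach_edge[of ec]) (auto simp: insert_commute)
  next
    case False
    then have "reach inc' T' c u" using con u nbr unfolding connected_on_def by blast
    then have "reach inc T' c u" using adj_cong[OF ag] by metis
    then show ?thesis by (rule reach_mono[rotated]) auto
  qed
  have "connected_on V inc ?T" unfolding connected_on_def
    using ra reach_sym rtrancl_trans by metis
  moreover have "acyclic_edges inc ?T" unfolding acyc_iff
  proof (intro ballI allI impI notI)
    fix g p q assume g: "g \<in> ?T" and gi: "inc g = {p, q}" and r: "reach inc (?T - {g}) p q"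
    show False
    proof (cases "g = ec")
      case True
      have "?T - {ec} = T'" using T'E by auto
      then have "reach inc T' v c" using True gi inc_c r reach_sym
        by (auto simp: doubleton_eq_iff)
      then have "c = v" using isolated[OF vf] by blast
      then show False using nbr by simp
    next
      case False
      then have gT: "g \<in> T'" using g by auto
      then have pq: "p \<noteq> v" "q \<noteq> v" using vf gi by auto
      have h1: "\<forall>h\<in>?T - {g}. v \<in> inc h \<longrightarrow> h = ec" using vf by auto
      from leaf_reach[OF h1 inc_c r pq(1)] pq(2) have "reach inc (?T - {g} - {ec}) p q" by simp
      moreover have "?T - {g} - {ec} = T' - {g}" using T'E by auto
      ultimately have "reach inc (T' - {g}) p q" by simp
      moreover have "\<forall>h\<in>T' - {g}. inc' h = inc h" using ag by auto
      ultimately have "reach inc' (T' - {g}) p q" using adj_cong by metis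
      moreover have "inc' g = {p, q}" using ag gT gi by auto
      ultimately show False using acyc' gT by blast
    qed
  qed
  moreover have "?T \<subseteq> E" using T'E inE by auto
  ultimately show ?thesis unfolding spanning_tree_def by blast
qed

lemma ST3:
  assumes st: "spanning_tree V E inc S" and s: "ea \<in> S" "eb \<in> S" "ec \<notin> S"
  shows "spanning_tree V' E' inc' (S - {ea, eb} \<union> {eab})"
proof -
  let ?S = "S - {ea, eb} \<union> {eab}"
  have SE: "S \<subseteq> E" and con: "connected_on V inc S" and ac: "acyclic_edges inc S"
    using st unfolding spanning_tree_def by auto
  have vS: "\<forall>g\<in>S. v \<in> inc g \<longrightarrow> g = ea \<or> g = eb" using SE vfree s by blast
  have nS: "eab \<notin> S" using SE new by auto
  have acyc: "\<forall>e\<in>S. \<forall>u w. inc e = {u, w} \<longrightarrow> \<not> reach inc (S - {e}) u w"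
    using ac[unfolded acyc_iff] .
  have "connected_on V' inc' ?S" unfolding connected_on_def
  proof (intro ballI)
    fix u w assume u: "u \<in> V'" and w: "w \<in> V'"
    then have "reach inc S u w" using con unfolding connected_on_def by blast
    from contract_reach[OF vS inc_a inc_b nS this] u w show "reach inc' ?S u w" by simp
  qed
  moreover have "acyclic_edges inc' ?S" unfolding acyc_iff
  proof (intro ballI allI impI notI)
    fix g p q assume g: "g \<in> ?S" and gi: "inc' g = {p, q}" and r: "reach inc' (?S - {g}) p q"
    show False
    proof (cases "g = eab")
      case True
      have eq: "?S - {eab} = S - {ea, eb}" using nS by auto
      have ag: "\<forall>h\<in>S - {ea, eb}. inc' h = inc h" using agree_set[of "S - {ea, eb}"] SE by blast
      have "reach inc' (S - {ea, eb}) p q" using r True eq by simp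
      then have "reach inc (S - {ea, eb}) p q" using adj_cong[OF ag] by metis
      moreover have "{p, q} = {a, b}" using gi True by simp
      ultimately have "reach inc (S - {ea, eb}) b a" using reach_sym
        by (auto simp: doubleton_eq_iff)
      then have ba: "reach inc (S - {ea}) b a" by (rule reach_mono[rotated]) auto
      have "(v, b) \<in> adj inc (S - {ea})" using s inc_b dist by (intro adj_edge[of eb]) auto
      then have "reach inc (S - {ea}) v a" using ba by (rule converse_rtrancl_into_rtrancl)
      then show False using acyc s inc_a by blast
    next
      case False
      then have gS: "g \<in> S - {ea, eb}" using g by auto
      then have gi2: "inc g = {p, q}" using gi SE agree by auto
      from expand_reach[where inc=inc and ea=ea and eb=eb and eab=eab and v=v and a=a and b=b, OF inc_a inc_b r]
      have "reach inc (?S - {g} - {eab} \<union> {ea, eb}) p q" .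
      moreover have "?S - {g} - {eab} \<union> {ea, eb} = S - {g}" using gS s nS by auto
      ultimately show False using acyc gS gi2 by auto
    qed
  qed
  moreover have "?S \<subseteq> E'" using SE s by auto
  ultimately show ?thesis unfolding spanning_tree_def by blast
qed

lemma ST2:
  assumes st: "spanning_tree V E inc T" and s: "ec \<in> T" "ea \<notin> T" "eb \<notin> T"
  shows "spanning_tree V' E' inc' (T - {ec})"
proof -
  have TE: "T \<subseteq> E" and con: "connected_on V inc T" and ac: "acyclic_edges inc T"
    using st unfolding spanning_tree_def by auto
  have vT: "\<forall>g\<in>T. v \<in> inc g \<longrightarrow> g = ec" using TE vfree s by blast
  have ag: "\<forall>h\<in>T - {ec}. inc h = inc' h" using agree_set2[of "T - {ec}"] TE by blast
  have "connected_on V' inc' (T - {ec})" unfolding connected_on_def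
  proof (intro ballI)
    fix u w assume u: "u \<in> V'" and w: "w \<in> V'"
    then have "reach inc T u w" using con unfolding connected_on_def by blast
    from leaf_reach[OF vT inc_c this] u w have "reach inc (T - {ec}) u w" by simp
    then show "reach inc' (T - {ec}) u w" using adj_cong[OF ag] by metis
  qed
  moreover have "acyclic_edges inc' (T - {ec})"
    using acyc_mono[of "T - {ec}" T inc] ac acyc_cong[OF ag] Diff_subset by metis
  moreover have "T - {ec} \<subseteq> E'" using TE s by auto
  ultimately show ?thesis unfolding spanning_tree_def by blast
qed


lemma treeA:
  assumes P: "(S', T') \<in> tree_pairs V' E' inc'" and e: "eab \<in> S'"
  shows "(S' - {eab} \<union> {ea, eb}, T' \<union> {ec}) \<in> tree_pairs V E inc"
proof -
  have st: "spanning_tree V' E' inc' S'" "spanning_tree V' E' inc' T'" "S' \<inter> T' = {}" "S' \<union> T' = E'"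
    using P unfolding tree_pairs_def by auto
  have nT: "eab \<notin> T'" using st(3) e by auto
  have sub: "S' \<subseteq> E'" "T' \<subseteq> E'" using st unfolding spanning_tree_def by auto
  have "(S' - {eab} \<union> {ea, eb}) \<inter> (T' \<union> {ec}) = {}" using st(3) sub dist inE new by auto
  moreover have "(S' - {eab} \<union> {ea, eb}) \<union> (T' \<union> {ec}) = E" using st(4) sub dist inE new nT e by auto
  ultimately show ?thesis unfolding tree_pairs_def using ST4[OF st(1) e] ST1[OF st(2) nT] by auto
qed

lemma treeB:
  assumes P: "(S, T) \<in> tree_pairs V E inc" and h: "ea \<in> S" "eb \<in> S" "ec \<in> T"
  shows "(S - {ea, eb} \<union> {eab}, T - {ec}) \<in> tree_pairs V' E' inc'"
proof -
  have st: "spanning_tree V E inc S" "spanning_tree V E inc T" "S \<inter> T = {}" "S \<union> T = E"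
    using P unfolding tree_pairs_def by auto
  have n: "ec \<notin> S" "ea \<notin> T" "eb \<notin> T" using st(3) h by auto
  have sub: "S \<subseteq> E" "T \<subseteq> E" using st unfolding spanning_tree_def by auto
  have "(S - {ea, eb} \<union> {eab}) \<inter> (T - {ec}) = {}" using st(3) sub new by auto
  moreover have "(S - {ea, eb} \<union> {eab}) \<union> (T - {ec}) = E'" using st(4) sub h n by auto
  ultimately show ?thesis unfolding tree_pairs_def
    using ST3[OF st(1) h(1,2) n(1)] ST2[OF st(2) h(3) n(2,3)] by auto
qed

lemma image:
  "rho eab ea eb ec ` tree_pairs V' E' inc' =
   {(S, T) \<in> tree_pairs V E inc. (ea \<in> S \<and> eb \<in> S \<and> ec \<in> T) \<or> (ea \<in> T \<and> eb \<in> T \<and> ec \<in> S)}"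
proof (intro equalityI subsetI)
  fix p assume "p \<in> rho eab ea eb ec ` tree_pairs V' E' inc'"
  then obtain S' T' where P: "(S', T') \<in> tree_pairs V' E' inc'" and p: "p = rho eab ea eb ec (S', T')"
    by auto
  have sub: "S' \<subseteq> E'" "T' \<subseteq> E'" "S' \<union> T' = E'"
    using P unfolding tree_pairs_def spanning_tree_def by auto
  show "p \<in> {(S, T) \<in> tree_pairs V E inc. (ea \<in> S \<and> eb \<in> S \<and> ec \<in> T) \<or> (ea \<in> T \<and> eb \<in> T \<and> ec \<in> S)}"
  proof (cases "eab \<in> S'")
    case True
    have "p = (S' - {eab} \<union> {ea, eb}, T' \<union> {ec})" using p True unfolding rho_def by simp
    with treeA[OF P True] show ?thesis by auto
  next
    case False
    then have e: "eab \<in> T'" using sub by auto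
    have P2: "(T', S') \<in> tree_pairs V' E' inc'" using P unfolding tree_pairs_def by auto
    have "p = (S' \<union> {ec}, T' - {eab} \<union> {ea, eb})" using p False unfolding rho_def by simp
    moreover have "(S' \<union> {ec}, T' - {eab} \<union> {ea, eb}) \<in> tree_pairs V E inc"
      using treeA[OF P2 e] unfolding tree_pairs_def by auto
    ultimately show ?thesis by auto
  qed
next
  fix p assume "p \<in> {(S, T) \<in> tree_pairs V E inc. (ea \<in> S \<and> eb \<in> S \<and> ec \<in> T) \<or> (ea \<in> T \<and> eb \<in> T \<and> ec \<in> S)}"
  then obtain S T where p: "p = (S, T)" and P: "(S, T) \<in> tree_pairs V E inc"
    and pat: "(ea \<in> S \<and> eb \<in> S \<and> ec \<in> T) \<or> (ea \<in> T \<and> eb \<in> T \<and> ec \<in> S)" by auto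
  have sub: "S \<subseteq> E" "T \<subseteq> E" "S \<inter> T = {}"
    using P unfolding tree_pairs_def spanning_tree_def by auto
  have nS: "eab \<notin> S" "eab \<notin> T" using sub new by auto
  from pat show "p \<in> rho eab ea eb ec ` tree_pairs V' E' inc'"
  proof
    assume h: "ea \<in> S \<and> eb \<in> S \<and> ec \<in> T"
    have "(S - {ea, eb} \<union> {eab}, T - {ec}) \<in> tree_pairs V' E' inc'" using treeB[OF P] h by auto
    moreover have "rho eab ea eb ec (S - {ea, eb} \<union> {eab}, T - {ec}) = (S, T)"
      unfolding rho_def using h nS by auto
    ultimately show ?thesis using p by (metis rev_image_eqI)
  next
    assume h: "ea \<in> T \<and> eb \<in> T \<and> ec \<in> S"
    have "(T, S) \<in> tree_pairs V E inc" using P unfolding tree_pairs_def by auto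
    then have "(T - {ea, eb} \<union> {eab}, S - {ec}) \<in> tree_pairs V' E' inc'" using treeB h by auto
    then have "(S - {ec}, T - {ea, eb} \<union> {eab}) \<in> tree_pairs V' E' inc'"
      unfolding tree_pairs_def by auto
    moreover have "rho eab ea eb ec (S - {ec}, T - {ea, eb} \<union> {eab}) = (S, T)"
      unfolding rho_def using h nS by auto
    ultimately show ?thesis using p by (metis rev_image_eqI)
  qed
qed

end



lemma card3: "card {a, b, c} = 3 \<Longrightarrow> a \<noteq> b \<and> a \<noteq> c \<and> b \<noteq> c"
  by (auto simp: card_insert_if split: if_splits)

lemma has_v_edge:
  assumes "spanning_tree V E inc T" "v \<in> V" "x \<in> V" "x \<noteq> v"
  shows "\<exists>g\<in>T. v \<in> inc g"
proof (rule ccontr)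
  assume "\<not> ?thesis"
  then have "\<forall>g\<in>T. v \<notin> inc g" by blast
  moreover have "reach inc T v x" using assms unfolding spanning_tree_def connected_on_def by blast
  ultimately have "x = v" using isolated by metis
  then show False using assms by simp
qed

theorem mainTheorem13:
  fixes V :: "'v set" and E :: "'e set" and inc :: "'e \<Rightarrow> 'v set"
    and v x y z :: 'v and ex ey ez exy exz eyz :: 'e
  assumes wf: "wf_graph V E inc"
    and bisp: "bispanning V E inc"
    and atom: "atomic V E inc"
    and vV: "v \<in> V"
    and edges_v: "{e \<in> E. v \<in> inc e} = {ex, ey, ez}"
    and deg3: "card {ex, ey, ez} = 3"
    and inc_x: "inc ex = {v, x}" and inc_y: "inc ey = {v, y}" and inc_z: "inc ez = {v, z}"
    and new_edges: "exy \<notin> E" "exz \<notin> E" "eyz \<notin> E"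
  defines "Axy \<equiv> rho exy ex ey ez ` tree_pairs (red_V V v) (red_E E ex ey ez exy) (red_inc inc exy x y)"
    and "Axz \<equiv> rho exz ex ez ey ` tree_pairs (red_V V v) (red_E E ex ey ez exz) (red_inc inc exz x z)"
    and "Ayz \<equiv> rho eyz ey ez ex ` tree_pairs (red_V V v) (red_E E ex ey ez eyz) (red_inc inc eyz y z)"
  shows "tree_pairs V E inc = Axy \<union> Axz \<union> Ayz \<and>
         Axy \<inter> Axz = {} \<and> Axy \<inter> Ayz = {} \<and> Axz \<inter> Ayz = {}"
proof -
  have d: "ex \<noteq> ey" "ex \<noteq> ez" "ey \<noteq> ez"
    using card3[OF deg3] by auto
  have s2: "{ex, ez, ey} = {ex, ey, ez}" and s3: "{ey, ez, ex} = {ex, ey, ez}" by blast+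
  have R1: "rs V E inc v x y z ex ey ez exy"
    by (unfold_locales) (use wf vV edges_v d inc_x inc_y inc_z new_edges in auto)
  have R2: "rs V E inc v x z y ex ez ey exz"
    by (unfold_locales) (use wf vV edges_v d inc_x inc_y inc_z new_edges s2 in auto)
  have R3: "rs V E inc v y z x ey ez ex eyz"
    by (unfold_locales) (use wf vV edges_v d inc_x inc_y inc_z new_edges s3 in auto)
  let ?TP = "tree_pairs V E inc"
  have A1: "Axy = {(S, T) \<in> ?TP. (ex \<in> S \<and> ey \<in> S \<and> ez \<in> T) \<or> (ex \<in> T \<and> ey \<in> T \<and> ez \<in> S)}"
    unfolding Axy_def red_V_def red_E_def red_inc_def by (rule rs.image[OF R1])
  have A2: "Axz = {(S, T) \<in> ?TP. (ex \<in> S \<and> ez \<in> S \<and> ey \<in> T) \<or> (ex \<in> T \<and> ez \<in> T \<and> ey \<in> S)}"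
    unfolding Axz_def red_V_def red_E_def red_inc_def s2[symmetric] by (rule rs.image[OF R2])
  have A3: "Ayz = {(S, T) \<in> ?TP. (ey \<in> S \<and> ez \<in> S \<and> ex \<in> T) \<or> (ey \<in> T \<and> ez \<in> T \<and> ex \<in> S)}"
    unfolding Ayz_def red_V_def red_E_def red_inc_def s3[symmetric] by (rule rs.image[OF R3])
  have inE: "ex \<in> E" "ey \<in> E" "ez \<in> E" using edges_v by blast+
  have xV: "x \<in> V" "x \<noteq> v" using rs.nbr[OF R1] by auto
  have cover: "(ex \<in> S \<and> ey \<in> S \<and> ez \<in> T) \<or> (ex \<in> T \<and> ey \<in> T \<and> ez \<in> S) \<or>
               (ex \<in> S \<and> ez \<in> S \<and> ey \<in> T) \<or> (ex \<in> T \<and> ez \<in> T \<and> ey \<in> S) \<or>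
               (ey \<in> S \<and> ez \<in> S \<and> ex \<in> T) \<or> (ey \<in> T \<and> ez \<in> T \<and> ex \<in> S)"
    if P: "(S, T) \<in> ?TP" for S T
  proof -
    have st: "spanning_tree V E inc S" "spanning_tree V E inc T" "S \<inter> T = {}" "S \<union> T = E"
      using P unfolding tree_pairs_def by auto
    have sub: "S \<subseteq> E" "T \<subseteq> E" using st unfolding spanning_tree_def by auto
    obtain g where g: "g \<in> S" "v \<in> inc g" using has_v_edge[OF st(1) vV xV] by blast
    obtain h where h: "h \<in> T" "v \<in> inc h" using has_v_edge[OF st(2) vV xV] by blast
    have "g \<in> {ex, ey, ez}" "h \<in> {ex, ey, ez}" using g h sub edges_v by blast+
    then show ?thesis using g(1) h(1) st(3,4) inE by blast
  qed
  have disj: "S \<inter> T = {}" if "(S, T) \<in> ?TP" for S T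
    using that unfolding tree_pairs_def by auto
  have "?TP \<subseteq> Axy \<union> Axz \<union> Ayz"
  proof
    fix p assume "p \<in> ?TP"
    then obtain S T where p: "p = (S, T)" "(S, T) \<in> ?TP" by (cases p) auto
    from cover[OF p(2)] show "p \<in> Axy \<union> Axz \<union> Ayz" unfolding A1 A2 A3 using p by blast
  qed
  moreover have "Axy \<union> Axz \<union> Ayz \<subseteq> ?TP" unfolding A1 A2 A3 by blast
  moreover have "Axy \<inter> Axz = {}"
  proof (rule equals0I)
    fix p assume "p \<in> Axy \<inter> Axz"
    then obtain S T where "p = (S, T)" "(S, T) \<in> ?TP"
      "(ex \<in> S \<and> ey \<in> S \<and> ez \<in> T) \<or> (ex \<in> T \<and> ey \<in> T \<and> ez \<in> S)"
      "(ex \<in> S \<and> ez \<in> S \<and> ey \<in> T) \<or> (ex \<in> T \<and> ez \<in> T \<and> ey \<in> S)"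
      unfolding A1 A2 by blast
    then show False using disj by blast
  qed
  moreover have "Axy \<inter> Ayz = {}"
  proof (rule equals0I)
    fix p assume "p \<in> Axy \<inter> Ayz"
    then obtain S T where "p = (S, T)" "(S, T) \<in> ?TP"
      "(ex \<in> S \<and> ey \<in> S \<and> ez \<in> T) \<or> (ex \<in> T \<and> ey \<in> T \<and> ez \<in> S)"
      "(ey \<in> S \<and> ez \<in> S \<and> ex \<in> T) \<or> (ey \<in> T \<and> ez \<in> T \<and> ex \<in> S)"
      unfolding A1 A3 by blast
    then show False using disj by blast
  qed
  moreover have "Axz \<inter> Ayz = {}"
  proof (rule equals0I)
    fix p assume "p \<in> Axz \<inter> Ayz"
    then obtain S T where "p = (S, T)" "(S, T) \<in> ?TP"
      "(ex \<in> S \<and> ez \<in> S \<and> ey \<in> T) \<or> (ex \<in> T \<and> ez \<in> T \<and> ey \<in> S)"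
      "(ey \<in> S \<and> ez \<in> S \<and> ex \<in> T) \<or> (ey \<in> T \<and> ez \<in> T \<and> ex \<in> S)"
      unfolding A2 A3 by blast
    then show False using disj by blast
  qed
  ultimately show ?thesis by blast
qed

end
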